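(* Let $O_{(4,1)}(x,y,z,w)=x^4z^2w^2+y^4x^2w^2+z^4x^2y^2+w^4y^2z^2-4x^2y^2z^2w^2$, and let $F$ be a real form of degree $8$ in $x,y,z,w$ with $0\le F\le O_{(4,1)}$ pointwise on $\mathbb R^4$. Let $\gamma_{x,3}(y,z,w)$ be the coefficient of $x^3$ in $F$, viewed as a polynomial in $x$ with coefficients in $\mathbb R[y,z,w]$. Then $\gamma_{x,3}$ contains none of the monomials $y^3w^2,y^3zw,y^3z^2,y^2w^3,y^2z^2w,y^2z^3,yzw^3,z^3w^2,z^2w^3$; in fact there are $q_{11},q_{12},q_{13}\in\mathbb R$ with $$\gamma_{x,3}(y,z,w)=yzw\,(q_{11}z^2+q_{12}zw+q_{13}yw),$$ so that $\gamma_{x,3}$ has only the monomials $y^2zw^2$, $yz^3w$, $yz^2w^2$. *)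

theory Defs
  imports Complex_Main
begin

text \<open>A real polynomial in x,y,z,w is represented by its coefficient function:
  c i j k l is the coefficient of x^i y^j z^k w^l.\<close>

definition form8 :: "(nat \<Rightarrow> nat \<Rightarrow> nat \<Rightarrow> nat \<Rightarrow> real) \<Rightarrow> bool" where
  "form8 c \<longleftrightarrow> (\<forall>i j k l. i + j + k + l \<noteq> 8 \<longrightarrow> c i j k l = 0)"

definition peval4 :: "(nat \<Rightarrow> nat \<Rightarrow> nat \<Rightarrow> nat \<Rightarrow> real) \<Rightarrow> real \<Rightarrow> real \<Rightarrow> real \<Rightarrow> real \<Rightarrow> real" where
  "peval4 c x y z w = (\<Sum>i\<le>8. \<Sum>j\<le>8. \<Sum>k\<le>8. \<Sum>l\<le>8. c i j k l * x^i * y^j * z^k * w^l)"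

definition O41 :: "real \<Rightarrow> real \<Rightarrow> real \<Rightarrow> real \<Rightarrow> real" where
  "O41 x y z w = x^4*z^2*w^2 + y^4*x^2*w^2 + z^4*x^2*y^2 + w^4*y^2*z^2 - 4*x^2*y^2*z^2*w^2"

end

theory Submission imports Defs "HOL-Computational_Algebra.Polynomial" begin

lemma low_coeffs_zero:
  fixes P :: "real poly"
  assumes bd: "\<And>t. 0 < t \<Longrightarrow> t \<le> 1 \<Longrightarrow> \<bar>poly P t\<bar> \<le> C * t ^ k"
    and nk: "n < k"
  shows "coeff P n = 0"
proof (rule ccontr)
  assume "coeff P n \<noteq> 0"
  define m where "m = (LEAST n. coeff P n \<noteq> 0)"
  have cm: "coeff P m \<noteq> 0" unfolding m_def by (rule LeastI) fact
  have mn: "m \<le> n" unfolding m_def by (rule Least_le) fact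
  have "\<forall>i<m. coeff P i = 0" unfolding m_def using not_less_Least by blast
  then have "monom 1 m dvd P" by (simp add: monom_1_dvd_iff')
  then obtain Q where Q: "P = monom 1 m * Q" by (erule dvdE)
  have "coeff Q 0 = coeff P m" using Q by (simp add: coeff_monom_mult)
  then have q0: "poly Q 0 \<noteq> 0" using cm by (simp add: poly_0_coeff_0)
  have ev: "eventually (\<lambda>t. \<bar>poly Q t\<bar> \<le> C * t) (at_right (0::real))"
  proof (rule eventually_at_rightI[where b=1])
    fix t :: real assume "t \<in> {0<..<1}"
    then have t: "0 < t \<and> t < 1" by simp
    have "t ^ m * \<bar>poly Q t\<bar> \<le> C * t ^ k" using bd[of t] t Q
      by (simp add: poly_monom abs_mult)
    also have "t ^ k = t ^ m * t ^ (k - m)" using mn nk by (simp flip: power_add)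
    finally have "\<bar>poly Q t\<bar> \<le> C * t ^ (k - m)" using t by (simp add: mult.left_commute)
    moreover have "C \<ge> 0"
      using bd[of t] t by (smt (verit) abs_ge_zero zero_less_power mult_neg_pos)
    moreover have "t ^ (k - m) \<le> t ^ 1" using t mn nk
      by (intro power_decreasing) auto
    ultimately show "\<bar>poly Q t\<bar> \<le> C * t"
      by (smt (verit) mult_left_mono power_one_right)
  qed (simp)
  have l1: "((\<lambda>t. \<bar>poly Q t\<bar>) \<longlongrightarrow> \<bar>poly Q 0\<bar>) (at_right 0)"
    by (intro tendsto_rabs) (metis isCont_def poly_isCont filterlim_at_split)
  have l2: "((\<lambda>t. C * t) \<longlongrightarrow> C * 0) (at_right (0::real))"
    by (intro tendsto_intros)
  have "\<bar>poly Q 0\<bar> \<le> C * 0"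
    by (rule tendsto_le[OF _ l2 l1 ev]) simp
  with q0 show False by simp
qed

lemma coeff_vanish:
  fixes c :: "nat \<Rightarrow> nat \<Rightarrow> nat \<Rightarrow> nat \<Rightarrow> real" and wa wb wc wd pa pb pc pd :: nat
  assumes f: "form8 c" and nn: "\<And>x y z w. 0 \<le> peval4 c x y z w"
    and le: "\<And>x y z w. peval4 c x y z w \<le> O41 x y z w"
    and psum: "pa+pb+pc+pd = 8"
    and uniq: "\<And>i j k l. i+j+k+l = 8 \<Longrightarrow> wa*i+wb*j+wc*k+wd*l = wa*pa+wb*pb+wc*pc+wd*pd
        \<Longrightarrow> i = pa \<and> j = pb \<and> k = pc \<and> l = pd"
    and h1: "wa*pa+wb*pb+wc*pc+wd*pd < wa*4+wc*2+wd*2"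
    and h2: "wa*pa+wb*pb+wc*pc+wd*pd < wb*4+wa*2+wd*2"
    and h3: "wa*pa+wb*pb+wc*pc+wd*pd < wc*4+wa*2+wb*2"
    and h4: "wa*pa+wb*pb+wc*pc+wd*pd < wd*4+wb*2+wc*2"
  shows "c pa pb pc pd = 0"
proof -
  define n where "n = wa*pa+wb*pb+wc*pc+wd*pd"
  define P where "P = (\<Sum>i\<le>8. \<Sum>j\<le>8. \<Sum>k\<le>8. \<Sum>l\<le>8.
      monom (c i j k l) (wa*i+wb*j+wc*k+wd*l))"
  have ev: "poly P t = peval4 c (t^wa) (t^wb) (t^wc) (t^wd)" for t :: real
    by (simp add: P_def peval4_def poly_sum poly_monom power_add mult_ac flip: power_mult)
  have O: "O41 (t^wa) (t^wb) (t^wc) (t^wd) = t^(wa*4+wc*2+wd*2) + t^(wb*4+wa*2+wd*2)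
      + t^(wc*4+wa*2+wb*2) + t^(wd*4+wb*2+wc*2) - 4 * t^(wa*2+wb*2+wc*2+wd*2)" for t :: real
    by (simp add: O41_def power_add power_mult mult_ac)
  have bd: "\<bar>poly P t\<bar> \<le> 4 * t ^ Suc n" if t: "0 < t" "t \<le> 1" for t :: real
  proof -
    have pd: "t ^ e \<le> t ^ Suc n" if "Suc n \<le> e" for e
      using t that by (intro power_decreasing) auto
    have "t ^ (wa*4+wc*2+wd*2) \<le> t ^ Suc n" using h1 by (intro pd) (simp add: n_def)
    moreover have "t ^ (wb*4+wa*2+wd*2) \<le> t ^ Suc n" using h2 by (intro pd) (simp add: n_def)
    moreover have "t ^ (wc*4+wa*2+wb*2) \<le> t ^ Suc n" using h3 by (intro pd) (simp add: n_def)
    moreover have "t ^ (wd*4+wb*2+wc*2) \<le> t ^ Suc n" using h4 by (intro pd) (simp add: n_def)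
    moreover have "0 \<le> t ^ (wa*2+wb*2+wc*2+wd*2)" using t by simp
    moreover have "0 \<le> poly P t" "poly P t \<le> O41 (t^wa) (t^wb) (t^wc) (t^wd)"
      using nn le ev by auto
    ultimately show ?thesis unfolding O by linarith
  qed
  have pl: "pa \<le> 8" "pb \<le> 8" "pc \<le> 8" "pd \<le> 8" using psum by auto
  have trm: "(if wa*i+wb*j+wc*k+wd*l = n then c i j k l else 0) =
     (if l = pd then if k = pc then if j = pb then if i = pa then c pa pb pc pd else 0 else 0 else 0 else 0)"
    for i j k l
  proof (cases "i+j+k+l = 8")
    case True
    then show ?thesis using uniq[of i j k l] by (auto simp: n_def)
  next
    case False
    then have "c i j k l = 0" using f unfolding form8_def by blast
    then show ?thesis using False psum by auto
  qed
  have "coeff P n = c pa pb pc pd"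
    by (simp add: P_def coeff_sum trm pl sum.delta)
  moreover have "coeff P n = 0"
    by (rule low_coeffs_zero[OF bd]) auto
  ultimately show ?thesis by simp
qed


lemma mod9_aux: "(k::nat) \<le> 8 \<Longrightarrow> (k + 9 * m) mod 9 = k"
  by (simp only: mod_mult_self2) simp

lemma digits_uniq:
  fixes i j k pa pb pc :: nat
  assumes "i \<le> 8" "j \<le> 8" "k \<le> 8" "pa \<le> 8" "pb \<le> 8" "pc \<le> 8"
    and e: "81*i+9*j+k = 81*pa+9*pb+pc"
  shows "i = pa \<and> j = pb \<and> k = pc"
proof -
  have e1: "k + 9*(9*i+j) = pc + 9*(9*pa+pb)" using e by simp
  have k: "k = pc" using mod9_aux[OF assms(3), of "9*i+j"] mod9_aux[OF assms(6), of "9*pa+pb"] e1 by simp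
  then have e2: "j + 9*i = pb + 9*pa" using e1 by simp
  have j: "j = pb" using mod9_aux[OF assms(2), of i] mod9_aux[OF assms(5), of pa] e2 by simp
  show ?thesis using k j e2 by simp
qed

lemma coeff_vanish2:
  fixes c :: "nat \<Rightarrow> nat \<Rightarrow> nat \<Rightarrow> nat \<Rightarrow> real" and ba bb bc bd pa pb pc pd :: nat
  assumes f: "form8 c" and nn: "\<And>x y z w. 0 \<le> peval4 c x y z w"
    and le: "\<And>x y z w. peval4 c x y z w \<le> O41 x y z w"
    and psum: "pa+pb+pc+pd = 8"
    and h1: "ba*pa+bb*pb+bc*pc+bd*pd < ba*4+bc*2+bd*2"
    and h2: "ba*pa+bb*pb+bc*pc+bd*pd < bb*4+ba*2+bd*2"
    and h3: "ba*pa+bb*pb+bc*pc+bd*pd < bc*4+ba*2+bb*2"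
    and h4: "ba*pa+bb*pb+bc*pc+bd*pd < bd*4+bb*2+bc*2"
  shows "c pa pb pc pd = 0"
proof -
  define B where "B = ba*pa+bb*pb+bc*pc+bd*pd"
  define rp where "rp = 81*pa+9*pb+pc"
  have rp: "rp \<le> 648" using psum unfolding rp_def by linarith
  have wp: "(729*ba+81)*pa+(729*bb+9)*pb+(729*bc+1)*pc+(729*bd)*pd = 729*B + rp"
    unfolding B_def rp_def by (simp add: algebra_simps)
  show ?thesis
  proof (rule coeff_vanish[where wa="729*ba+81" and wb="729*bb+9" and wc="729*bc+1" and wd="729*bd", OF f nn le psum])
    fix i j k l :: nat
    assume s: "i+j+k+l = 8"
      and e: "(729*ba+81)*i+(729*bb+9)*j+(729*bc+1)*k+(729*bd)*l =
              (729*ba+81)*pa+(729*bb+9)*pb+(729*bc+1)*pc+(729*bd)*pd"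
    define Be where "Be = ba*i+bb*j+bc*k+bd*l"
    define re where "re = 81*i+9*j+k"
    have re: "re \<le> 648" using s unfolding re_def by linarith
    have "(729*ba+81)*i+(729*bb+9)*j+(729*bc+1)*k+(729*bd)*l = 729*Be + re"
      unfolding Be_def re_def by (simp add: algebra_simps)
    with e wp have eq: "729*Be + re = 729*B + rp" by simp
    have "(729*Be + re) mod 729 = re" using re by simp
    moreover have "(729*B + rp) mod 729 = rp" using rp by simp
    ultimately have "re = rp" using eq by metis
    then have "i = pa \<and> j = pb \<and> k = pc"
      using s psum unfolding re_def rp_def by (intro digits_uniq) auto
    then show "i = pa \<and> j = pb \<and> k = pc \<and> l = pd" using s psum by auto
  next
    have "B < ba*4+bc*2+bd*2" using h1 B_def by simp
    then have "729*B + 729 \<le> 729*(ba*4+bc*2+bd*2)" by simp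
    then show "(729*ba+81)*pa+(729*bb+9)*pb+(729*bc+1)*pc+(729*bd)*pd <
      (729*ba+81)*4+(729*bc+1)*2+(729*bd)*2" using wp rp by (simp add: algebra_simps)
  next
    have "B < bb*4+ba*2+bd*2" using h2 B_def by simp
    then have "729*B + 729 \<le> 729*(bb*4+ba*2+bd*2)" by simp
    then show "(729*ba+81)*pa+(729*bb+9)*pb+(729*bc+1)*pc+(729*bd)*pd <
      (729*bb+9)*4+(729*ba+81)*2+(729*bd)*2" using wp rp by (simp add: algebra_simps)
  next
    have "B < bc*4+ba*2+bb*2" using h3 B_def by simp
    then have "729*B + 729 \<le> 729*(bc*4+ba*2+bb*2)" by simp
    then show "(729*ba+81)*pa+(729*bb+9)*pb+(729*bc+1)*pc+(729*bd)*pd <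
      (729*bc+1)*4+(729*ba+81)*2+(729*bb+9)*2" using wp rp by (simp add: algebra_simps)
  next
    have "B < bd*4+bb*2+bc*2" using h4 B_def by simp
    then have "729*B + 729 \<le> 729*(bd*4+bb*2+bc*2)" by simp
    then show "(729*ba+81)*pa+(729*bb+9)*pb+(729*bc+1)*pc+(729*bd)*pd <
      (729*bd)*4+(729*bb+9)*2+(729*bc+1)*2" using wp rp by (simp add: algebra_simps)
  qed
qed

lemma z_3005:
  assumes "form8 c" "\<And>x y z w. 0 \<le> peval4 c x y z w" "\<And>x y z w. peval4 c x y z w \<le> O41 x y z w"
  shows "c 3 0 0 5 = 0"
  by (rule coeff_vanish2[where ba=0 and bb=1 and bc=1 and bd=0, OF assms]) simp_all

lemma z_3014:
  assumes "form8 c" "\<And>x y z w. 0 \<le> peval4 c x y z w" "\<And>x y z w. peval4 c x y z w \<le> O41 x y z w"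
  shows "c 3 0 1 4 = 0"
  by (rule coeff_vanish2[where ba=0 and bb=1 and bc=1 and bd=0, OF assms]) simp_all

lemma z_3023:
  assumes "form8 c" "\<And>x y z w. 0 \<le> peval4 c x y z w" "\<And>x y z w. peval4 c x y z w \<le> O41 x y z w"
  shows "c 3 0 2 3 = 0"
  by (rule coeff_vanish2[where ba=1 and bb=2 and bc=0 and bd=0, OF assms]) simp_all

lemma z_3032:
  assumes "form8 c" "\<And>x y z w. 0 \<le> peval4 c x y z w" "\<And>x y z w. peval4 c x y z w \<le> O41 x y z w"
  shows "c 3 0 3 2 = 0"
  by (rule coeff_vanish2[where ba=1 and bb=2 and bc=0 and bd=0, OF assms]) simp_all

lemma z_3041:
  assumes "form8 c" "\<And>x y z w. 0 \<le> peval4 c x y z w" "\<And>x y z w. peval4 c x y z w \<le> O41 x y z w"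
  shows "c 3 0 4 1 = 0"
  by (rule coeff_vanish2[where ba=0 and bb=1 and bc=0 and bd=1, OF assms]) simp_all

lemma z_3050:
  assumes "form8 c" "\<And>x y z w. 0 \<le> peval4 c x y z w" "\<And>x y z w. peval4 c x y z w \<le> O41 x y z w"
  shows "c 3 0 5 0 = 0"
  by (rule coeff_vanish2[where ba=0 and bb=1 and bc=0 and bd=1, OF assms]) simp_all

lemma z_3104:
  assumes "form8 c" "\<And>x y z w. 0 \<le> peval4 c x y z w" "\<And>x y z w. peval4 c x y z w \<le> O41 x y z w"
  shows "c 3 1 0 4 = 0"
  by (rule coeff_vanish2[where ba=0 and bb=1 and bc=1 and bd=0, OF assms]) simp_all

lemma z_3113:
  assumes "form8 c" "\<And>x y z w. 0 \<le> peval4 c x y z w" "\<And>x y z w. peval4 c x y z w \<le> O41 x y z w"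
  shows "c 3 1 1 3 = 0"
  by (rule coeff_vanish2[where ba=0 and bb=1 and bc=2 and bd=0, OF assms]) simp_all

lemma z_3140:
  assumes "form8 c" "\<And>x y z w. 0 \<le> peval4 c x y z w" "\<And>x y z w. peval4 c x y z w \<le> O41 x y z w"
  shows "c 3 1 4 0 = 0"
  by (rule coeff_vanish2[where ba=0 and bb=1 and bc=0 and bd=1, OF assms]) simp_all

lemma z_3203:
  assumes "form8 c" "\<And>x y z w. 0 \<le> peval4 c x y z w" "\<And>x y z w. peval4 c x y z w \<le> O41 x y z w"
  shows "c 3 2 0 3 = 0"
  by (rule coeff_vanish2[where ba=0 and bb=1 and bc=2 and bd=0, OF assms]) simp_all

lemma z_3221:
  assumes "form8 c" "\<And>x y z w. 0 \<le> peval4 c x y z w" "\<And>x y z w. peval4 c x y z w \<le> O41 x y z w"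
  shows "c 3 2 2 1 = 0"
  by (rule coeff_vanish2[where ba=0 and bb=1 and bc=2 and bd=3, OF assms]) simp_all

lemma z_3230:
  assumes "form8 c" "\<And>x y z w. 0 \<le> peval4 c x y z w" "\<And>x y z w. peval4 c x y z w \<le> O41 x y z w"
  shows "c 3 2 3 0 = 0"
  by (rule coeff_vanish2[where ba=0 and bb=0 and bc=1 and bd=2, OF assms]) simp_all

lemma z_3302:
  assumes "form8 c" "\<And>x y z w. 0 \<le> peval4 c x y z w" "\<And>x y z w. peval4 c x y z w \<le> O41 x y z w"
  shows "c 3 3 0 2 = 0"
  by (rule coeff_vanish2[where ba=0 and bb=1 and bc=2 and bd=0, OF assms]) simp_all

lemma z_3311:
  assumes "form8 c" "\<And>x y z w. 0 \<le> peval4 c x y z w" "\<And>x y z w. peval4 c x y z w \<le> O41 x y z w"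
  shows "c 3 3 1 1 = 0"
  by (rule coeff_vanish2[where ba=0 and bb=0 and bc=1 and bd=2, OF assms]) simp_all

lemma z_3320:
  assumes "form8 c" "\<And>x y z w. 0 \<le> peval4 c x y z w" "\<And>x y z w. peval4 c x y z w \<le> O41 x y z w"
  shows "c 3 3 2 0 = 0"
  by (rule coeff_vanish2[where ba=0 and bb=0 and bc=1 and bd=2, OF assms]) simp_all

lemma z_3401:
  assumes "form8 c" "\<And>x y z w. 0 \<le> peval4 c x y z w" "\<And>x y z w. peval4 c x y z w \<le> O41 x y z w"
  shows "c 3 4 0 1 = 0"
  by (rule coeff_vanish2[where ba=0 and bb=0 and bc=1 and bd=1, OF assms]) simp_all

lemma z_3410:
  assumes "form8 c" "\<And>x y z w. 0 \<le> peval4 c x y z w" "\<And>x y z w. peval4 c x y z w \<le> O41 x y z w"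
  shows "c 3 4 1 0 = 0"
  by (rule coeff_vanish2[where ba=0 and bb=0 and bc=1 and bd=1, OF assms]) simp_all

lemma z_3500:
  assumes "form8 c" "\<And>x y z w. 0 \<le> peval4 c x y z w" "\<And>x y z w. peval4 c x y z w \<le> O41 x y z w"
  shows "c 3 5 0 0 = 0"
  by (rule coeff_vanish2[where ba=0 and bb=0 and bc=1 and bd=1, OF assms]) simp_all

lemma enum5: "(x::nat) \<le> 5 \<Longrightarrow> x = 0 \<or> x = 1 \<or> x = 2 \<or> x = 3 \<or> x = 4 \<or> x = 5" by auto

theorem lemma1:
  fixes c :: "nat \<Rightarrow> nat \<Rightarrow> nat \<Rightarrow> nat \<Rightarrow> real"
  assumes "form8 c"
    and "\<And>x y z w. 0 \<le> peval4 c x y z w"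
    and "\<And>x y z w. peval4 c x y z w \<le> O41 x y z w"
  shows "\<exists>q11 q12 q13 :: real. \<forall>a b d.
           c 3 a b d = (if (a, b, d) = (1, 3, 1) then q11
                        else if (a, b, d) = (1, 2, 2) then q12
                        else if (a, b, d) = (2, 1, 2) then q13 else 0)"
proof (intro exI allI)
  fix a b d :: nat
  note zs = z_3005[OF assms] z_3014[OF assms] z_3023[OF assms] z_3032[OF assms] z_3041[OF assms] z_3050[OF assms] z_3104[OF assms] z_3113[OF assms] z_3140[OF assms] z_3203[OF assms] z_3221[OF assms] z_3230[OF assms] z_3302[OF assms] z_3311[OF assms] z_3320[OF assms] z_3401[OF assms] z_3410[OF assms] z_3500[OF assms]
  show "c 3 a b d = (if (a, b, d) = (1, 3, 1) then c 3 1 3 1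
                        else if (a, b, d) = (1, 2, 2) then c 3 1 2 2
                        else if (a, b, d) = (2, 1, 2) then c 3 2 1 2 else 0)"
  proof (cases "a + b + d = 5")
    case True
    then have d: "d = 5 - a - b" and "a \<le> 5" "b \<le> 5" by auto
    then have "a = 0 \<or> a = 1 \<or> a = 2 \<or> a = 3 \<or> a = 4 \<or> a = 5"
      "b = 0 \<or> b = 1 \<or> b = 2 \<or> b = 3 \<or> b = 4 \<or> b = 5" by (auto dest: enum5)
    then show ?thesis using True d zs by (elim disjE) simp_all
  next
    case False
    then have "c 3 a b d = 0" using assms(1) unfolding form8_def by auto
    then show ?thesis using False by auto
  qed
qed

end
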